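(* We have $$ \sum_{n=0}^\infty\widetilde W(2n)\left(\frac t{(4+t)(1+4t)}\right)^n =\frac{(4+t)(1+4t)}{4(1+4t+t^2)} \,{}_2F_1\left(\tfrac12,\tfrac12;1;\frac{t(4+t)}{1+4t+t^2}\right) \cdot{}_2F_1\left(\tfrac12,\tfrac12;1;\frac{t^2}{1+4t+t^2}\right) $$ and, more generally, $$ \frac b{(b+t)(1+bt)}\sum_{n=0}^\infty\left(\frac t{(b+t)(1+bt)}\right)^n\sum_{k=0}^n{n\choose k}^2{2k\choose k}^2\left(\frac b4\right)^{2k} ={}_2F_1\left(\tfrac12,\tfrac12;1;-t(b+t)\right) \cdot\frac1{(1+bt)^{1/2}}\,{}_2F_1\left(\tfrac12,\tfrac12;1;-\frac{t^2}{1+bt}\right) $$ $$ =\frac1{1+bt+t^2}\,{}_2F_1\left(\tfrac12,\tfrac12;1;\frac{t(b+t)}{1+bt+t^2}\right) \cdot{}_2F_1\left(\tfrac12,\tfrac12;1;\frac{t^2}{1+bt+t^2}\right). $$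
   Context: Here ${}_2F_1(a_1,a_2;b_2;z)=\sum_{n\ge0}\frac{(a_1)_n(a_2)_n}{(b_2)_n}\frac{z^n}{n!}$ is the Gauss hypergeometric series with Pochhammer symbol $(a)_n=\Gamma(a+n)/\Gamma(a)$. The quantity $\widetilde W(s)=\iiint_{[0,1]^3}|1+e^{2\pi i\theta_1}+e^{2\pi i\theta_2}+e^{2\pi i\theta_3}+e^{2\pi i(\theta_2+\theta_3)}|^s\,d\theta_1\,d\theta_2\,d\theta_3$ is the zeta Mahler measure of $1+x_1+x_2+x_3+x_2x_3$ (the $s$-th moment of a 5-step planar walk whose last step direction is determined by the previous two), and its even moments are $\widetilde W(2n)=\operatorname{CT}\bigl((1+x_1+x_2+x_3+x_2x_3)(1+x_1^{-1}+x_2^{-1}+x_3^{-1}+(x_2x_3)^{-1})\bigr)^n=\sum_{k=0}^n{n\choose k}^2{2k\choose k}^2$. The identities are as formal power series in $t$ (equivalently for $t$ near $0$), with $b$ a parameter. *)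

theory Defs
  imports "HOL-Computational_Algebra.Formal_Power_Series"
begin

definition hyp2F1 :: "real \<Rightarrow> real \<Rightarrow> real \<Rightarrow> real fps" where
  "hyp2F1 a1 a2 b2 = Abs_fps (\<lambda>n. pochhammer a1 n * pochhammer a2 n / (pochhammer b2 n * fact n))"

definition Wt_even :: "nat \<Rightarrow> real" where
  "Wt_even n = (\<Sum>k\<le>n. real ((n choose k)^2 * ((2*k) choose k)^2))"

definition Wt_b :: "real \<Rightarrow> nat \<Rightarrow> real" where
  "Wt_b b n = (\<Sum>k\<le>n. real ((n choose k)^2 * ((2*k) choose k)^2) * (b/4)^(2*k))"

end

theory Submission
  imports Defs
begin

notation fps_nth (infixl "$$" 75)


lemma power_nth_below:
  fixes a :: "'a::comm_ring_1 fps"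
  assumes "a $$ 0 = 0" "j < k" shows "(a ^ k) $$ j = 0"
  using startsby_zero_power_prefix[OF assms(1)] assms(2) by blast

lemma compose_trunc:
  fixes A :: "'a::comm_ring_1 fps"
  assumes "r $$ 0 = 0" "j \<le> n"
  shows "(A oo r) $$ j = (\<Sum>k\<le>n. A $$ k * (r ^ k) $$ j)"
proof -
  have "(A oo r) $$ j = (\<Sum>k\<in>{0..j}. A $$ k * (r ^ k) $$ j)" by (simp add: fps_compose_nth)
  also have "\<dots> = (\<Sum>k\<le>n. A $$ k * (r ^ k) $$ j)"
    by (rule sum.mono_neutral_left) (use assms power_nth_below[OF assms(1)] in auto)
  finally show ?thesis .
qed

lemma mult_cong_nth:
  fixes A :: "'a::comm_ring_1 fps"
  assumes "\<And>j. j \<le> n \<Longrightarrow> A $$ j = A' $$ j" "\<And>j. j \<le> n \<Longrightarrow> B $$ j = B' $$ j"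
  shows "(A * B) $$ n = (A' * B') $$ n"
  unfolding fps_mult_nth using assms by (intro sum.cong) auto

lemma compose_cong_nth:
  fixes A :: "'a::comm_ring_1 fps"
  assumes "\<And>j. j \<le> n \<Longrightarrow> A $$ j = A' $$ j"
  shows "(A oo w) $$ n = (A' oo w) $$ n"
  unfolding fps_compose_nth using assms by (intro sum.cong) auto

lemma trunc_poly:
  fixes A :: "'a::comm_ring_1 fps"
  assumes "r $$ 0 = 0" "j \<le> n"
  shows "(A oo r) $$ j = (\<Sum>k\<le>n. fps_const (A $$ k) * r ^ k) $$ j"
  unfolding compose_trunc[OF assms] fps_sum_nth by simp

lemma cmult_nth: fixes G :: "'a::comm_ring_1 fps" shows "(G * (fps_const c * H)) $$ n = c * (G * H) $$ n"
proof -
  have "G * (fps_const c * H) = fps_const c * (G * H)" by (simp add: mult_ac)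
  then show ?thesis by (metis fps_mult_left_const_nth)
qed

lemma GC:
  fixes A :: "'a::comm_ring_1 fps"
  assumes "r $$ 0 = 0"
  shows "(G * (A oo r)) $$ n = (\<Sum>k\<le>n. A $$ k * (G * r ^ k) $$ n)"
proof -
  have "(G * (A oo r)) $$ n = (G * (\<Sum>k\<le>n. fps_const (A $$ k) * r ^ k)) $$ n"
    by (rule mult_cong_nth) (use trunc_poly[OF assms] in auto)
  also have "\<dots> = (\<Sum>k\<le>n. A $$ k * (G * r ^ k) $$ n)"
    by (simp add: sum_distrib_left fps_sum_nth cmult_nth)
  finally show ?thesis .
qed

lemma prod_compose_nth:
  fixes U :: "'a::comm_ring_1 fps"
  assumes "a $$ 0 = 0" "b $$ 0 = 0"
  shows "((U oo a) * (V oo b)) $$ n = (\<Sum>p\<le>n. \<Sum>q\<le>n. U $$ p * V $$ q * (a ^ p * b ^ q) $$ n)"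
proof -
  have "((U oo a) * (V oo b)) $$ n = ((\<Sum>p\<le>n. fps_const (U $$ p) * a ^ p) * (\<Sum>q\<le>n. fps_const (V $$ q) * b ^ q)) $$ n"
    by (rule mult_cong_nth) (use trunc_poly[OF assms(1)] trunc_poly[OF assms(2)] in auto)
  also have "\<dots> = (\<Sum>p\<le>n. \<Sum>q\<le>n. U $$ p * V $$ q * (a ^ p * b ^ q) $$ n)"
  proof -
    have "(\<Sum>p\<le>n. fps_const (U $$ p) * a ^ p) * (\<Sum>q\<le>n. fps_const (V $$ q) * b ^ q)
       = (\<Sum>p\<le>n. \<Sum>q\<le>n. fps_const (U $$ p * V $$ q) * (a ^ p * b ^ q))"
      unfolding sum_product by (intro sum.cong refl) (simp add: mult_ac)
    then show ?thesis by (simp add: fps_sum_nth fps_mult_left_const_nth)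
  qed
  finally show ?thesis .
qed

definition sumfam :: "(nat \<Rightarrow> nat \<Rightarrow> real) \<Rightarrow> (nat \<Rightarrow> nat \<Rightarrow> real fps) \<Rightarrow> real fps" where
  "sumfam c T = Abs_fps (\<lambda>k. \<Sum>N\<le>k. \<Sum>m\<le>N. c N m * T N m $$ k)"

definition ord_ok :: "(nat \<Rightarrow> nat \<Rightarrow> real fps) \<Rightarrow> bool" where
  "ord_ok T \<longleftrightarrow> (\<forall>N m j. m \<le> N \<longrightarrow> j < N \<longrightarrow> T N m $$ j = 0)"

lemma sumfam_trunc:
  assumes "ord_ok T" "j \<le> n"
  shows "sumfam c T $$ j = (\<Sum>N\<le>n. \<Sum>m\<le>N. fps_const (c N m) * T N m) $$ j"
proof -
  have "sumfam c T $$ j = (\<Sum>N\<le>j. \<Sum>m\<le>N. c N m * T N m $$ j)" by (simp add: sumfam_def)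
  also have "\<dots> = (\<Sum>N\<le>n. \<Sum>m\<le>N. c N m * T N m $$ j)"
    by (rule sum.mono_neutral_left) (use assms in \<open>auto simp: ord_ok_def\<close>)
  finally show ?thesis by (simp add: fps_sum_nth)
qed

lemma sumfam_mult:
  assumes "ord_ok T"
  shows "G * sumfam c T = sumfam c (\<lambda>N m. G * T N m)"
proof (rule fps_ext)
  fix n
  have "(G * sumfam c T) $$ n = (G * (\<Sum>N\<le>n. \<Sum>m\<le>N. fps_const (c N m) * T N m)) $$ n"
    by (rule mult_cong_nth) (use sumfam_trunc[OF assms] in auto)
  also have "\<dots> = sumfam c (\<lambda>N m. G * T N m) $$ n"
    by (simp add: sumfam_def sum_distrib_left fps_sum_nth cmult_nth)
  finally show "(G * sumfam c T) $$ n = sumfam c (\<lambda>N m. G * T N m) $$ n" .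
qed

lemma sumfam_compose:
  assumes "ord_ok T" "w $$ 0 = 0"
  shows "sumfam c T oo w = sumfam c (\<lambda>N m. T N m oo w)"
proof (rule fps_ext)
  fix n
  have "(sumfam c T oo w) $$ n = ((\<Sum>N\<le>n. \<Sum>m\<le>N. fps_const (c N m) * T N m) oo w) $$ n"
    by (rule compose_cong_nth) (use sumfam_trunc[OF assms(1)] in auto)
  also have "\<dots> = sumfam c (\<lambda>N m. T N m oo w) $$ n"
    by (simp add: sumfam_def fps_compose_sum_distrib fps_compose_mult_distrib[OF assms(2)] fps_sum_nth)
  finally show "(sumfam c T oo w) $$ n = sumfam c (\<lambda>N m. T N m oo w) $$ n" .
qed

lemma sumfam_cong:
  assumes "\<And>N m. m \<le> N \<Longrightarrow> T N m = T' N m"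
  shows "sumfam c T = sumfam c T'"
  unfolding sumfam_def using assms by (intro arg_cong[where f=Abs_fps] ext sum.cong) auto



lemma neg1_diff: "m \<le> p \<Longrightarrow> (-1::real)^(p-m) = (-1)^p * (-1)^m"
proof -
  assume "m \<le> p"
  then obtain d where p: "p = m + d" using le_Suc_ex by blast
  have "(-1::real)^m * (-1)^m = 1" by (simp flip: power_add add: mult_2[symmetric] power_mult)
  then show ?thesis unfolding p by (simp add: power_add)
qed

lemma CV:
  fixes a :: real
  shows "(\<Sum>m\<le>p. (-1)^m * real (p choose m) * pochhammer a m / fact m) = pochhammer (1 - a) p / fact p"
proof -
  have "(\<Sum>k=0..p. ((-a) gchoose k) * (of_nat p gchoose (p - k))) = ((-a) + of_nat p) gchoose p"
    by (rule gbinomial_Vandermonde)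
  moreover have "((-a) gchoose k) * (of_nat p gchoose (p - k)) = (-1)^k * real (p choose k) * pochhammer a k / fact k"
    if "k \<in> {0..p}" for k
  proof -
    have "(of_nat p gchoose (p - k) :: real) = real (p choose (p-k))" by (simp add: binomial_gbinomial)
    also have "\<dots> = real (p choose k)" using that by (simp add: binomial_symmetric[symmetric])
    finally show ?thesis by (simp add: gbinomial_pochhammer)
  qed
  moreover have "((-a) + of_nat p) gchoose p = pochhammer (1 - a) p / fact p"
    by (simp add: gbinomial_pochhammer')
  ultimately show ?thesis by (simp add: atMost_atLeast0)
qed

lemma PK_le:
  assumes "p \<le> q"
  shows "pochhammer (1/2 - real q) p * pochhammer (1/2 - real p) q = pochhammer (1/2::real) p * pochhammer (1/2) q"
proof -
  obtain d where q: "q = p + d" using assms le_Suc_ex by blast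
  have e1: "pochhammer (1/2 - real q) p = (-1)^p * pochhammer (real d + 1/2) p"
    using pochhammer_minus[of "real q - 1/2" p] unfolding q by (simp add: algebra_simps)
  have e2: "pochhammer (1/2 - real p) p = (-1)^p * pochhammer (1/2) p"
    using pochhammer_minus[of "real p - 1/2" p] by (simp add: algebra_simps)
  have e3: "pochhammer (1/2 - real p) q = pochhammer (1/2 - real p) p * pochhammer (1/2) d"
    unfolding q pochhammer_product' by simp
  have e4: "pochhammer (1/2::real) q = pochhammer (1/2) d * pochhammer (1/2 + real d) p"
    unfolding q by (simp add: pochhammer_product' add.commute[of p d])
  have "((-1::real)^p)^2 = 1" by (simp flip: power_mult add: power_mult[symmetric] mult.commute)
  then show ?thesis unfolding e1 e3 e2 e4 by (simp add: algebra_simps power2_eq_square)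
qed

lemma PK: "pochhammer (1/2 - real q) p * pochhammer (1/2 - real p) q = pochhammer (1/2::real) p * pochhammer (1/2) q"
  by (cases "p \<le> q") (use PK_le[of p q] PK_le[of q p] in \<open>auto simp: mult.commute\<close>)



definition f :: "nat \<Rightarrow> real" where "f n = (pochhammer (1/2) n / fact n)^2"

abbreviation FF :: "real fps" where "FF \<equiv> hyp2F1 (1/2) (1/2) 1"

lemma FF_nth: "FF $$ n = f n"
  by (simp add: hyp2F1_def f_def power2_eq_square pochhammer_fact[symmetric])

lemma pfaff_coeff:
  "(\<Sum>k\<le>n. f k * ((- real k - 1/2) gchoose (n - k))) = (-1)^n * f n"
proof -
  have t: "f k * ((- real k - 1/2) gchoose (n - k)) =
      (-1)^n * (pochhammer (1/2) n / fact n) * ((-1)^k * real (n choose k) * pochhammer (1/2) k / fact k)"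
    if "k \<le> n" for k
  proof -
    have g: "((- real k - 1/2) gchoose (n - k)) = (-1)^(n-k) * pochhammer (real k + 1/2) (n-k) / fact (n-k)"
      by (simp add: gbinomial_pochhammer algebra_simps)
    have pp: "pochhammer (1/2::real) k * pochhammer (real k + 1/2) (n-k) = pochhammer (1/2) n"
      using pochhammer_product'[of "1/2::real" k "n-k"] that by (simp add: add.commute)
    have bf: "real (n choose k) = fact n / (fact k * fact (n-k))" using that by (simp add: binomial_fact)
    show ?thesis unfolding g f_def bf neg1_diff[OF that] using pp[symmetric]
      by (simp add: field_simps power2_eq_square)
  qed
  have "(\<Sum>k\<le>n. f k * ((- real k - 1/2) gchoose (n - k))) =
      (-1)^n * (pochhammer (1/2) n / fact n) * (\<Sum>k\<le>n. (-1)^k * real (n choose k) * pochhammer (1/2) k / fact k)"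
    by (simp add: t sum_distrib_left)
  also have "\<dots> = (-1)^n * f n" unfolding CV by (simp add: f_def power2_eq_square)
  finally show ?thesis .
qed

definition Ap :: "nat \<Rightarrow> nat \<Rightarrow> nat \<Rightarrow> real" where
  "Ap p q m = (-1)^(p-m) * pochhammer (1/2) (q+m) / (fact m ^ 2 * fact (p-m))"

lemma Ap_sum: "(\<Sum>m\<le>p. Ap p q m) = (-1)^p * pochhammer (1/2) q * pochhammer (1/2 - real q) p / fact p ^ 2"
proof -
  have t: "Ap p q m = (-1)^p * pochhammer (1/2) q / fact p * ((-1)^m * real (p choose m) * pochhammer (real q + 1/2) m / fact m)"
    if "m \<le> p" for m
  proof -
    have pp: "pochhammer (1/2::real) (q+m) = pochhammer (1/2) q * pochhammer (real q + 1/2) m"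
      using pochhammer_product'[of "1/2::real" q m] by (simp add: algebra_simps)
    have bf: "real (p choose m) = fact p / (fact m * fact (p-m))" using that by (simp add: binomial_fact)
    show ?thesis unfolding Ap_def pp bf neg1_diff[OF that] by (simp add: field_simps power2_eq_square)
  qed
  have "(\<Sum>m\<le>p. Ap p q m) = (-1)^p * pochhammer (1/2) q / fact p * (\<Sum>m\<le>p. (-1)^m * real (p choose m) * pochhammer (real q + 1/2) m / fact m)"
    by (simp add: t sum_distrib_left)
  also have "\<dots> = (-1)^p * pochhammer (1/2) q * pochhammer (1/2 - real q) p / fact p ^ 2"
    unfolding CV by (simp add: power2_eq_square algebra_simps)
  finally show ?thesis .
qed

lemma bracket_term:
  assumes "m \<le> p" "i \<le> q"
  shows "f (m+i) * real ((m+i) choose m)^2 * ((- real (m+i) - 1/2) gchoose (p - m))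
          * ((- real (m+i) - 1/2) gchoose (q - i)) = Ap p q m * Ap q p i"
proof -
  have g1: "((- real (m+i) - 1/2) gchoose (p - m)) = (-1)^(p-m) * pochhammer (real (m+i) + 1/2) (p-m) / fact (p-m)"
    by (simp add: gbinomial_pochhammer algebra_simps)
  have g2: "((- real (m+i) - 1/2) gchoose (q - i)) = (-1)^(q-i) * pochhammer (real (m+i) + 1/2) (q-i) / fact (q-i)"
    by (simp add: gbinomial_pochhammer algebra_simps)
  have p1: "pochhammer (1/2::real) (m+i) * pochhammer (real (m+i) + 1/2) (p-m) = pochhammer (1/2) (p+i)"
    using pochhammer_product'[of "1/2::real" "m+i" "p-m"] assms by (simp add: add.commute)
  have p2: "pochhammer (1/2::real) (m+i) * pochhammer (real (m+i) + 1/2) (q-i) = pochhammer (1/2) (q+m)"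
    using pochhammer_product'[of "1/2::real" "m+i" "q-i"] assms by (simp add: add.commute)
  have bf: "real ((m+i) choose m) = fact (m+i) / (fact m * fact i)" by (simp add: binomial_fact)
  have "f (m+i) * real ((m+i) choose m)^2 = pochhammer (1/2) (m+i) ^ 2 / (fact m * fact i)^2"
    unfolding f_def bf by (simp add: field_simps power2_eq_square)
  then have "f (m+i) * real ((m+i) choose m)^2 * ((- real (m+i) - 1/2) gchoose (p - m))
          * ((- real (m+i) - 1/2) gchoose (q - i)) =
     (-1)^(p-m) * (-1)^(q-i) * (pochhammer (1/2) (m+i) * pochhammer (real (m+i) + 1/2) (p-m))
      * (pochhammer (1/2) (m+i) * pochhammer (real (m+i) + 1/2) (q-i)) / ((fact m * fact i)^2 * fact (p-m) * fact (q-i))"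
    unfolding g1 g2 by (simp add: field_simps power2_eq_square)
  also have "\<dots> = Ap p q m * Ap q p i" unfolding p1 p2 Ap_def by (simp add: field_simps power2_eq_square)
  finally show ?thesis .
qed

lemma bracket_box:
  "(\<Sum>m\<le>p. \<Sum>i\<le>q. f (m+i) * real ((m+i) choose m)^2 * ((- real (m+i) - 1/2) gchoose (p - m))
          * ((- real (m+i) - 1/2) gchoose (q - i))) = (-1)^(p+q) * f p * f q"
proof -
  have "(\<Sum>m\<le>p. \<Sum>i\<le>q. f (m+i) * real ((m+i) choose m)^2 * ((- real (m+i) - 1/2) gchoose (p - m))
          * ((- real (m+i) - 1/2) gchoose (q - i))) = (\<Sum>m\<le>p. \<Sum>i\<le>q. Ap p q m * Ap q p i)"
    by (rule sum.cong[OF refl], rule sum.cong[OF refl], rule bracket_term) auto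
  also have "\<dots> = (\<Sum>m\<le>p. Ap p q m) * (\<Sum>i\<le>q. Ap q p i)" by (simp add: sum_product)
  also have "\<dots> = (-1)^(p+q) * f p * f q"
    unfolding Ap_sum f_def using PK[of q p]
    by (simp add: field_simps power2_eq_square power_add)
  finally show ?thesis .
qed



lemma rho0: "(fps_X * inverse (1 + fps_X :: real fps)) $$ 0 = 0" by simp

lemma rho_pow: "(fps_X * inverse (1 + fps_X))^k * fps_binomial (-1/2) = fps_X^k * fps_binomial (- real k - 1/2 :: real)"
proof -
  have "(fps_X * inverse (1 + fps_X :: real fps))^k = fps_X^k * fps_binomial (-1)^k"
    by (simp add: power_mult_distrib fps_binomial_minus_one)
  also have "fps_binomial (-1 :: real)^k = fps_binomial (- real k)"
    by (simp add: fps_binomial_power)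
  finally have "(fps_X * inverse (1 + fps_X))^k * fps_binomial (-1/2) = fps_X^k * (fps_binomial (- real k) * fps_binomial (-1/2 :: real))"
    by (simp add: mult.assoc)
  also have "fps_binomial (- real k) * fps_binomial (-1/2 :: real) = fps_binomial (- real k - 1/2)"
    by (simp add: fps_binomial_add_mult[symmetric])
  finally show ?thesis .
qed

definition Fm :: "real fps" where "Fm = Abs_fps (\<lambda>n. (-1)^n * f n)"

lemma pfaff_X: "Fm = fps_binomial (-1/2) * (FF oo (fps_X * inverse (1 + fps_X)))"
proof (rule fps_ext)
  fix n
  have "(fps_binomial (-1/2) * (FF oo (fps_X * inverse (1 + fps_X)))) $$ n
     = (\<Sum>k\<le>n. FF $$ k * (fps_binomial (-1/2) * (fps_X * inverse (1 + fps_X))^k) $$ n)"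
    by (rule GC) simp
  also have "\<dots> = (\<Sum>k\<le>n. f k * ((- real k - 1/2) gchoose (n - k)))"
  proof (intro sum.cong refl)
    fix k assume k: "k \<in> {..n}"
    have "fps_binomial (-1/2) * (fps_X * inverse (1 + fps_X))^k = fps_X^k * fps_binomial (- real k - 1/2 :: real)"
      using rho_pow[of k] by (simp only: mult.commute)
    then show "FF $$ k * (fps_binomial (-1/2) * (fps_X * inverse (1 + fps_X))^k) $$ n = f k * ((- real k - 1/2) gchoose (n - k))"
      using k by (simp only: FF_nth fps_X_power_mult_nth fps_binomial_nth) simp
  qed
  also have "\<dots> = Fm $$ n" by (simp add: pfaff_coeff Fm_def)
  finally show "Fm $$ n = (fps_binomial (-1/2) * (FF oo (fps_X * inverse (1 + fps_X)))) $$ n" ..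
qed

lemma FF_neg: assumes "a $$ 0 = 0" shows "FF oo (-a) = Fm oo a"
proof -
  have "-a = (-fps_X) oo a" using assms by (simp add: fps_compose_uminus)
  then have "FF oo (-a) = FF oo ((-fps_X) oo a)" by simp
  also have "\<dots> = (FF oo (-fps_X)) oo a" by (rule fps_compose_assoc) (use assms in auto)
  also have "FF oo (-fps_X) = Fm" by (simp add: fps_compose_uminus' Fm_def FF_nth)
  finally show ?thesis .
qed

lemma pfaff:
  assumes "a $$ 0 = 0"
  shows "FF oo (-a) = (fps_binomial (-1/2) oo a) * (FF oo (a * inverse (1 + a)))"
proof -
  have "FF oo (-a) = (fps_binomial (-1/2) * (FF oo (fps_X * inverse (1 + fps_X)))) oo a"
    using FF_neg[OF assms] pfaff_X by simp
  also have "\<dots> = (fps_binomial (-1/2) oo a) * ((FF oo (fps_X * inverse (1 + fps_X))) oo a)"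
    by (rule fps_compose_mult_distrib) (rule assms)
  also have "(FF oo (fps_X * inverse (1 + fps_X))) oo a = FF oo ((fps_X * inverse (1 + fps_X)) oo a)"
    by (rule fps_compose_assoc[symmetric]) (use assms in auto)
  also have "(fps_X * inverse (1 + fps_X)) oo a = a * inverse (1 + a)"
    using assms by (simp add: fps_compose_mult_distrib fps_inverse_compose fps_compose_add_distrib)
  finally show ?thesis .
qed



definition hh :: "nat \<Rightarrow> nat \<Rightarrow> real" where "hh N m = f N * real (N choose m)^2"
definition BN :: "nat \<Rightarrow> real fps" where "BN N = fps_binomial (- real N - 1/2)"

lemma prod_below:
  fixes A :: "'a::comm_ring_1 fps"
  assumes "\<And>i. i < p \<Longrightarrow> A $$ i = 0" "\<And>j. j < q \<Longrightarrow> B $$ j = 0" "n < p + q"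
  shows "(A * B) $$ n = 0"
  unfolding fps_mult_nth
proof (rule sum.neutral, intro ballI)
  fix x assume x: "x \<in> {0..n}"
  show "A $$ x * B $$ (n - x) = 0"
  proof (cases "x < p")
    case True then show ?thesis using assms(1) by simp
  next
    case False then have "n - x < q" using assms(3) x by auto
    then show ?thesis using assms(2) by simp
  qed
qed

lemma box_reindex:
  fixes g :: "nat \<Rightarrow> nat \<Rightarrow> real"
  assumes "p + q \<le> n"
  shows "(\<Sum>N\<le>n. \<Sum>m\<le>N. (if m \<le> p \<and> N - m \<le> q then g m (N-m) else 0)) = (\<Sum>m\<le>p. \<Sum>i\<le>q. g m i)"
proof -
  let ?h = "\<lambda>m i. if m \<le> p \<and> i \<le> q then g m i else 0"
  have "(\<Sum>N\<le>n. \<Sum>m\<le>N. (if m \<le> p \<and> N - m \<le> q then g m (N-m) else 0)) = (\<Sum>(m,i)\<in>{(m,i). m+i \<le> n}. ?h m i)"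
    by (simp add: sum.triangle_reindex_eq)
  also have "\<dots> = (\<Sum>(m,i)\<in>{..p}\<times>{..q}. ?h m i)"
  proof (rule sum.mono_neutral_right)
    show "finite {(m, i). m + i \<le> n}"
      by (rule finite_subset[of _ "{..n}\<times>{..n}"]) auto
    show "{..p} \<times> {..q} \<subseteq> {(m, i). m + i \<le> n}" using assms by auto
  qed (auto split: if_splits)
  also have "\<dots> = (\<Sum>(m,i)\<in>{..p}\<times>{..q}. g m i)" by (intro sum.cong) auto
  also have "\<dots> = (\<Sum>m\<le>p. \<Sum>i\<le>q. g m i)" by (simp add: sum.cartesian_product)
  finally show ?thesis .
qed

lemma swap4:
  fixes g :: "nat \<Rightarrow> nat \<Rightarrow> nat \<Rightarrow> nat \<Rightarrow> real"
  shows "(\<Sum>N\<le>n. \<Sum>m\<le>N. \<Sum>p\<le>n. \<Sum>q\<le>n. g N m p q) = (\<Sum>p\<le>n. \<Sum>q\<le>n. \<Sum>N\<le>n. \<Sum>m\<le>N. g N m p q)"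
proof -
  have "(\<Sum>N\<le>n. \<Sum>m\<le>N. \<Sum>p\<le>n. \<Sum>q\<le>n. g N m p q) = (\<Sum>N\<le>n. \<Sum>p\<le>n. \<Sum>q\<le>n. \<Sum>m\<le>N. g N m p q)"
  proof (rule sum.cong[OF refl])
    fix N assume "N \<in> {..n}"
    have "(\<Sum>m\<le>N. \<Sum>p\<le>n. \<Sum>q\<le>n. g N m p q) = (\<Sum>p\<le>n. \<Sum>m\<le>N. \<Sum>q\<le>n. g N m p q)"
      by (rule sum.swap)
    also have "\<dots> = (\<Sum>p\<le>n. \<Sum>q\<le>n. \<Sum>m\<le>N. g N m p q)"
      by (rule sum.cong[OF refl], rule sum.swap)
    finally show "(\<Sum>m\<le>N. \<Sum>p\<le>n. \<Sum>q\<le>n. g N m p q) = (\<Sum>p\<le>n. \<Sum>q\<le>n. \<Sum>m\<le>N. g N m p q)" .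
  qed
  also have "\<dots> = (\<Sum>p\<le>n. \<Sum>N\<le>n. \<Sum>q\<le>n. \<Sum>m\<le>N. g N m p q)" by (rule sum.swap)
  also have "\<dots> = (\<Sum>p\<le>n. \<Sum>q\<le>n. \<Sum>N\<le>n. \<Sum>m\<le>N. g N m p q)" by (rule sum.cong[OF refl], rule sum.swap)
  finally show ?thesis .
qed

lemma XBN_nth: "(fps_X ^ m * BN N) $$ p = (if p < m then 0 else ((- real N - 1/2) gchoose (p - m)))"
  by (simp add: fps_X_power_mult_nth BN_def)

lemma compose_X_pow: assumes "a $$ 0 = 0" shows "(fps_X ^ m :: real fps) oo a = a ^ m"
  using assms by (simp add: fps_compose_power[symmetric])

definition gbox :: "nat \<Rightarrow> nat \<Rightarrow> nat \<Rightarrow> nat \<Rightarrow> real" where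
  "gbox p q m i = f (m+i) * real ((m+i) choose m)^2 * ((- real (m+i) - 1/2) gchoose (p - m))
                  * ((- real (m+i) - 1/2) gchoose (q - i))"

lemma bracket_box': "(\<Sum>m\<le>p. \<Sum>i\<le>q. gbox p q m i) = (-1)^(p+q) * f p * f q"
  unfolding gbox_def by (rule bracket_box)

lemma E2:
  assumes a0: "a $$ 0 = 0" and b0: "b $$ 0 = 0"
  shows "(FF oo (-a)) * (FF oo (-b)) = sumfam hh (\<lambda>N m. a^m * b^(N-m) * (BN N oo a) * (BN N oo b))"
proof (rule fps_ext)
  fix n
  have L: "((FF oo (-a)) * (FF oo (-b))) $$ n = (\<Sum>p\<le>n. \<Sum>q\<le>n. Fm $$ p * Fm $$ q * (a ^ p * b ^ q) $$ n)"
    unfolding FF_neg[OF a0] FF_neg[OF b0] by (rule prod_compose_nth[OF a0 b0])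
  have T: "a^m * b^(N-m) * (BN N oo a) * (BN N oo b) = ((fps_X^m * BN N) oo a) * ((fps_X^(N-m) * BN N) oo b)" for N m
    using a0 b0 by (simp add: fps_compose_mult_distrib compose_X_pow mult_ac)
  have "sumfam hh (\<lambda>N m. a^m * b^(N-m) * (BN N oo a) * (BN N oo b)) $$ n
      = (\<Sum>N\<le>n. \<Sum>m\<le>N. hh N m * (\<Sum>p\<le>n. \<Sum>q\<le>n. (fps_X^m * BN N) $$ p * (fps_X^(N-m) * BN N) $$ q * (a ^ p * b ^ q) $$ n))"
    by (simp add: sumfam_def T prod_compose_nth[OF a0 b0])
  also have "\<dots> = (\<Sum>N\<le>n. \<Sum>m\<le>N. \<Sum>p\<le>n. \<Sum>q\<le>n. hh N m * ((fps_X^m * BN N) $$ p * (fps_X^(N-m) * BN N) $$ q) * (a ^ p * b ^ q) $$ n)"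
    by (simp add: sum_distrib_left mult_ac)
  also have "\<dots> = (\<Sum>p\<le>n. \<Sum>q\<le>n. \<Sum>N\<le>n. \<Sum>m\<le>N. hh N m * ((fps_X^m * BN N) $$ p * (fps_X^(N-m) * BN N) $$ q) * (a ^ p * b ^ q) $$ n)"
    by (rule swap4)
  also have "\<dots> = (\<Sum>p\<le>n. \<Sum>q\<le>n. Fm $$ p * Fm $$ q * (a ^ p * b ^ q) $$ n)"
  proof (intro sum.cong refl)
    fix p q assume p: "p \<in> {..n}" and q: "q \<in> {..n}"
    show "(\<Sum>N\<le>n. \<Sum>m\<le>N. hh N m * ((fps_X^m * BN N) $$ p * (fps_X^(N-m) * BN N) $$ q) * (a ^ p * b ^ q) $$ n)
        = Fm $$ p * Fm $$ q * (a ^ p * b ^ q) $$ n"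
    proof (cases "p + q \<le> n")
      case False
      have "(a ^ p * b ^ q) $$ n = 0"
        by (rule prod_below[of p _ q]) (use False power_nth_below[OF a0] power_nth_below[OF b0] in auto)
      then show ?thesis by simp
    next
      case True
      have "(\<Sum>N\<le>n. \<Sum>m\<le>N. hh N m * ((fps_X^m * BN N) $$ p * (fps_X^(N-m) * BN N) $$ q))
          = (\<Sum>N\<le>n. \<Sum>m\<le>N. (if m \<le> p \<and> N - m \<le> q then
               gbox p q m (N-m) else 0))"
        by (intro sum.cong refl) (auto simp: XBN_nth hh_def gbox_def)
      also have "\<dots> = (-1)^(p+q) * f p * f q"
        using box_reindex[OF True, of "gbox p q"] bracket_box' by simp
      moreover have "(\<Sum>N\<le>n. \<Sum>m\<le>N. hh N m * ((fps_X^m * BN N) $$ p * (fps_X^(N-m) * BN N) $$ q) * (a ^ p * b ^ q) $$ n)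
        = (\<Sum>N\<le>n. \<Sum>m\<le>N. hh N m * ((fps_X^m * BN N) $$ p * (fps_X^(N-m) * BN N) $$ q)) * (a ^ p * b ^ q) $$ n"
        by (simp add: sum_distrib_right)
      ultimately show ?thesis by (simp add: Fm_def power_add)
    qed
  qed
  finally show "((FF oo (-a)) * (FF oo (-b))) $$ n = sumfam hh (\<lambda>N m. a^m * b^(N-m) * (BN N oo a) * (BN N oo b)) $$ n"
    using L by simp
qed



lemma altsum: "(\<Sum>j\<le>K. (-1)^(K-j) * real (K choose j) * real ((N+j) choose N)) = real (N choose K)"
proof -
  have V: "(\<Sum>j=0..K. ((- real (N+1)) gchoose j) * (real K gchoose (K - j))) = ((- real (N+1)) + real K) gchoose K"
    by (rule gbinomial_Vandermonde)
  have t: "((- real (N+1)) gchoose j) * (real K gchoose (K - j)) = (-1)^j * real ((N+j) choose N) * real (K choose j)"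
    if "j \<le> K" for j
  proof -
    have "((- real (N+1)) gchoose j) = (-1)^j * ((real j - (- real (N+1)) - 1) gchoose j)"
      by (rule gbinomial_negated_upper)
    also have "(real j - (- real (N+1)) - 1) = real (N+j)" by simp
    also have "(real (N+j) gchoose j) = real ((N+j) choose N)"
      using binomial_gbinomial[of "N+j" j] binomial_symmetric[of j "N+j"] by (metis add_diff_cancel_right' le_add2)
    finally have 1: "((- real (N+1)) gchoose j) = (-1)^j * real ((N+j) choose N)" .
    have 2: "(real K gchoose (K - j)) = real (K choose j)"
      using that by (simp add: binomial_gbinomial[symmetric] binomial_symmetric[symmetric])
    show ?thesis unfolding 1 2 ..
  qed
  have R: "((- real (N+1)) + real K) gchoose K = (-1)^K * real (N choose K)"
  proof -
    have "((- real (N+1)) + real K) gchoose K = (-1)^K * ((real K - ((- real (N+1)) + real K) - 1) gchoose K)"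
      by (rule gbinomial_negated_upper)
    also have "(real K - ((- real (N+1)) + real K) - 1) = real N" by simp
    finally show ?thesis by (simp add: binomial_gbinomial)
  qed
  have "(\<Sum>j\<le>K. (-1)^j * real ((N+j) choose N) * real (K choose j)) = (-1)^K * real (N choose K)"
    using V R t by (simp add: atMost_atLeast0)
  then have "(-1)^K * (\<Sum>j\<le>K. (-1)^j * real ((N+j) choose N) * real (K choose j)) = real (N choose K)"
    by (simp flip: power_add add: mult_2[symmetric] power_mult)
  moreover have "(-1)^K * (\<Sum>j\<le>K. (-1)^j * real ((N+j) choose N) * real (K choose j))
      = (\<Sum>j\<le>K. (-1)^(K-j) * real (K choose j) * real ((N+j) choose N))"
    by (simp add: sum_distrib_left neg1_diff mult_ac)
  ultimately show ?thesis by simp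
qed

lemma BinA:
  assumes "N \<le> k"
  shows "(\<Sum>n\<le>k. real (n choose N)^2 * ((- real (n+1)) gchoose (k - n))) = real (k choose N) * real (N choose (k - N))"
proof -
  define K where "K = k - N"
  have k: "k = N + K" using assms K_def by simp
  have g: "((- real (n+1)) gchoose (k - n)) = (-1)^(k-n) * real (k choose n)" if "n \<le> k" for n
  proof -
    have "((- real (n+1)) gchoose (k - n)) = (-1)^(k-n) * ((real (k-n) - (- real (n+1)) - 1) gchoose (k-n))"
      by (rule gbinomial_negated_upper)
    also have "real (k-n) - (- real (n+1)) - 1 = real k" using that by simp
    finally show ?thesis using that by (simp add: binomial_gbinomial[symmetric] binomial_symmetric[symmetric])
  qed
  have "(\<Sum>n\<le>k. real (n choose N)^2 * ((- real (n+1)) gchoose (k - n)))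
      = (\<Sum>n\<le>k. (-1)^(k-n) * real (k choose n) * real (n choose N)^2)"
  proof (rule sum.cong[OF refl])
    fix n assume "n \<in> {..k}"
    then have "n \<le> k" by simp
    from g[OF this] show "real (n choose N)^2 * ((- real (n+1)) gchoose (k - n)) = (-1)^(k-n) * real (k choose n) * real (n choose N)^2"
      by simp
  qed
  also have "\<dots> = (\<Sum>n\<in>{N..N+K}. (-1)^(k-n) * real (k choose n) * real (n choose N)^2)"
    by (rule sum.mono_neutral_right) (auto simp: k)
  also have "\<dots> = (\<Sum>j\<le>K. (-1)^(k-(N+j)) * real (k choose (N+j)) * real ((N+j) choose N)^2)"
  proof -
    have "{N..N+K} = (\<lambda>j. N + j) ` {..K}"
    proof (auto simp: image_iff)
      fix x assume "N \<le> x" "x \<le> N + K"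
      then show "\<exists>xa\<in>{..K}. x = N + xa" by (intro bexI[of _ "x - N"]) auto
    qed
    then show ?thesis by (simp add: sum.reindex)
  qed
  also have "\<dots> = (\<Sum>j\<le>K. real (k choose N) * ((-1)^(K-j) * real (K choose j) * real ((N+j) choose N)))"
  proof (intro sum.cong refl)
    fix j assume j: "j \<in> {..K}"
    have "(k choose (N+j)) * ((N+j) choose N) = (k choose N) * ((k - N) choose (N + j - N))"
      by (rule choose_mult) (use j k in auto)
    then have cm: "real (k choose (N+j)) * real ((N+j) choose N) = real (k choose N) * real (K choose j)"
      by (simp add: K_def flip: of_nat_mult)
    have "k - (N+j) = K - j" using k by simp
    then show "(-1)^(k-(N+j)) * real (k choose (N+j)) * real ((N+j) choose N)^2
        = real (k choose N) * ((-1)^(K-j) * real (K choose j) * real ((N+j) choose N))"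
      using cm by (simp add: power2_eq_square mult_ac)
  qed
  also have "\<dots> = real (k choose N) * real (N choose K)"
    by (simp add: sum_distrib_left[symmetric] altsum)
  finally show ?thesis by (simp add: K_def)
qed



lemma BinB_nat:
  assumes "N \<le> k"
  shows "(\<Sum>m\<le>N. (N choose m)^2 * (if k < 2*N - m then 0 else (m choose (k + m - 2*N)))) = (k choose N) * (N choose (k - N))"
proof -
  define K where "K = k - N"
  have k: "k = N + K" using assms K_def by simp
  show ?thesis
  proof (cases "K \<le> N")
    case False
    have "(N choose m)^2 * (if k < 2*N - m then 0 else (m choose (k + m - 2*N))) = 0" if "m \<le> N" for m
      using False that by (auto simp: k)
    then have "(\<Sum>m\<le>N. (N choose m)^2 * (if k < 2*N - m then 0 else (m choose (k + m - 2*N)))) = 0" by simp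
    moreover have "N choose (k - N) = 0" using False by (simp add: K_def)
    ultimately show ?thesis by simp
  next
    case True
    define r where "r = N - K"
    have N: "N = r + K" using True r_def by simp
    have "(\<Sum>m\<le>N. (N choose m)^2 * (if k < 2*N - m then 0 else (m choose (k + m - 2*N))))
        = (\<Sum>m\<in>{r..N}. (N choose m)^2 * (m choose r))"
    proof -
      have "(\<Sum>m\<le>N. (N choose m)^2 * (if k < 2*N - m then 0 else (m choose (k + m - 2*N))))
          = (\<Sum>m\<in>{r..N}. (N choose m)^2 * (if k < 2*N - m then 0 else (m choose (k + m - 2*N))))"
        by (rule sum.mono_neutral_right) (auto simp: k N)
      also have "\<dots> = (\<Sum>m\<in>{r..N}. (N choose m)^2 * (m choose r))"
      proof (rule sum.cong[OF refl])
        fix m assume m: "m \<in> {r..N}"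
        then have "\<not> k < 2*N - m" "k + m - 2*N = m - r" using k N by auto
        moreover have "m choose (m - r) = m choose r" using m by (simp add: binomial_symmetric[symmetric])
        ultimately show "(N choose m)^2 * (if k < 2*N - m then 0 else (m choose (k + m - 2*N))) = (N choose m)^2 * (m choose r)"
          by simp
      qed
      finally show ?thesis .
    qed
    also have "\<dots> = (\<Sum>i\<le>K. (N choose r) * ((K choose i) * (N choose (K - i))))"
    proof -
      have "{r..N} = (\<lambda>i. r + i) ` {..K}"
      proof (auto simp: image_iff N)
        fix x assume "r \<le> x" "x \<le> r + K"
        then show "\<exists>xa\<in>{..K}. x = r + xa" by (intro bexI[of _ "x - r"]) auto
      qed
      then have "(\<Sum>m\<in>{r..N}. (N choose m)^2 * (m choose r)) = (\<Sum>i\<le>K. (N choose (r+i))^2 * ((r+i) choose r))"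
        by (simp add: sum.reindex)
      also have "\<dots> = (\<Sum>i\<le>K. (N choose r) * ((K choose i) * (N choose (K - i))))"
      proof (rule sum.cong[OF refl])
        fix i assume i: "i \<in> {..K}"
        have cm: "(N choose (r+i)) * ((r+i) choose r) = (N choose r) * ((N - r) choose (r + i - r))"
          by (rule choose_mult) (use i N in auto)
        have s: "N choose (r+i) = N choose (K - i)"
          using i N binomial_symmetric[of "r+i" N] by auto
        show "(N choose (r+i))^2 * ((r+i) choose r) = (N choose r) * ((K choose i) * (N choose (K - i)))"
          using cm s N by (simp add: power2_eq_square mult_ac)
      qed
      finally show ?thesis .
    qed
    also have "\<dots> = (N choose r) * ((K + N) choose K)"
      by (simp add: sum_distrib_left[symmetric] vandermonde)
    also have "N choose r = N choose K" using N binomial_symmetric[of K N] by simp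
    also have "(K + N) choose K = k choose N" using k binomial_symmetric[of N k] by (simp add: add.commute)
    finally show ?thesis by (simp add: K_def mult.commute)
  qed
qed

lemma BinB:
  assumes "N \<le> k"
  shows "(\<Sum>m\<le>N. real (N choose m)^2 * (if k < 2*N - m then 0 else real (m choose (k + m - 2*N)))) = real (k choose N) * real (N choose (k - N))"
proof -
  have "real (\<Sum>m\<le>N. (N choose m)^2 * (if k < 2*N - m then 0 else (m choose (k + m - 2*N)))) = real ((k choose N) * (N choose (k - N)))"
    using BinB_nat[OF assms] by simp
  then show ?thesis by (simp add: of_nat_sum if_distrib cong: if_cong)
qed



lemma f_choose: "real (((2*N) choose N)^2) * (b/4)^(2*N) = f N * b^(2*N)"
proof -
  have fd: "fact (2*N) = (2^(2*N) * pochhammer (1/2) N * fact N :: real)" by (rule fact_double)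
  have "real ((2*N) choose N) = fact (2*N) / (fact N * fact N)"
    by (simp add: binomial_fact)
  also have "\<dots> = 2^(2*N) * pochhammer (1/2) N / fact N" unfolding fd by (simp add: field_simps)
  finally have c: "real ((2*N) choose N) = 2^(2*N) * pochhammer (1/2) N / fact N" .
  have p4: "(4::real)^(2*N) = 2^(2*N) * 2^(2*N)" by (simp add: power_mult_distrib[symmetric])
  show ?thesis unfolding f_def of_nat_power c power_divide p4 by (simp add: field_simps power2_eq_square)
qed

lemma Wt_b_expand: "Wt_b b n = (\<Sum>N\<le>n. real (n choose N)^2 * (f N * b^(2*N)))"
  unfolding Wt_b_def
proof (rule sum.cong[OF refl])
  fix N
  show "real ((n choose N)\<^sup>2 * (2 * N choose N)\<^sup>2) * (b / 4) ^ (2 * N) = real (n choose N)^2 * (f N * b^(2*N))"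
    using f_choose[of N b] by (simp add: mult.assoc)
qed

lemma inv_bX:
  fixes b :: real
  assumes "b \<noteq> 0"
  shows "inverse (fps_const b + fps_X) = fps_const (1/b) * (fps_binomial (-1) oo (fps_const (1/b) * fps_X))"
proof -
  have c0: "(fps_const (1/b) * fps_X :: real fps) $$ 0 = 0" by simp
  have "fps_binomial (-1) oo (fps_const (1/b) * fps_X) = inverse ((1 + fps_X) oo (fps_const (1/b) * fps_X))"
    by (simp add: fps_binomial_minus_one fps_inverse_compose)
  also have "(1 + fps_X) oo (fps_const (1/b) * fps_X) = 1 + fps_const (1/b) * fps_X"
    by (simp add: fps_compose_add_distrib)
  finally have e: "fps_binomial (-1) oo (fps_const (1/b) * fps_X) = inverse (1 + fps_const (1/b) * fps_X)" .
  have h: "fps_const b * fps_const (1/b) = (1::real fps)"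
  proof -
    have "fps_const b * fps_const (1/b) = fps_const (b * (1/b))" by (simp only: fps_const_mult)
    also have "b * (1/b) = 1" using assms by simp
    finally show ?thesis by simp
  qed
  have "fps_const b * (1 + fps_const (1/b) * fps_X) = fps_const b + (fps_const b * fps_const (1/b)) * fps_X"
    by (simp add: algebra_simps)
  then have "fps_const b + fps_X = fps_const b * (1 + fps_const (1/b) * fps_X)"
    unfolding h by simp
  then have "inverse (fps_const b + fps_X) = inverse (fps_const b) * inverse (1 + fps_const (1/b) * fps_X)"
    by (simp add: fps_inverse_mult)
  then show ?thesis unfolding e by (simp add: fps_const_inverse divide_inverse)
qed

lemma inv_bX_pow_nth:
  fixes b :: real
  assumes "b \<noteq> 0"
  shows "(inverse (fps_const b + fps_X) ^ r) $$ j = ((- real r) gchoose j) / b^(r+j)"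
proof -
  have "inverse (fps_const b + fps_X) ^ r = fps_const ((1/b)^r) * (fps_binomial (-1) ^ r oo (fps_const (1/b) * fps_X))"
    unfolding inv_bX[OF assms] power_mult_distrib by (simp add: fps_compose_power fps_const_power)
  also have "fps_binomial (-1) ^ r = fps_binomial (- real r :: real)" by (simp add: fps_binomial_power)
  finally have e: "inverse (fps_const b + fps_X) ^ r = fps_const ((1/b)^r) * (fps_binomial (- real r) oo (fps_const (1/b) * fps_X))" .
  have "(fps_binomial (- real r) oo (fps_const (1/b) * fps_X)) $$ j = (1/b)^j * ((- real r) gchoose j)"
    by (simp only: fps_compose_linear fps_nth_Abs_fps fps_binomial_nth)
  then show ?thesis unfolding e fps_mult_left_const_nth by (simp add: power_add field_simps)
qed

lemma bX_pow_nth: "((fps_const (b::real) + fps_X) ^ m) $$ j = real (m choose j) * b^(m-j)"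
proof -
  have "(fps_X + fps_const b) ^ m = (\<Sum>i\<le>m. of_nat (m choose i) * fps_X ^ i * fps_const b ^ (m - i))"
    by (rule binomial_ring)
  then have "((fps_const b + fps_X) ^ m) $$ j = (\<Sum>k\<le>m. real (m choose k) * ((if j = k then 1 else 0) * b ^ (m - k)))"
    by (simp add: add.commute fps_sum_nth fps_const_power mult.assoc fps_X_power_mult_nth fps_of_nat[symmetric] del: fps_of_nat)
  also have "\<dots> = (\<Sum>k\<le>m. (if j = k then real (m choose k) * b ^ (m - k) else 0))"
    by (intro sum.cong) auto
  also have "\<dots> = real (m choose j) * b^(m-j)"
    by (cases "j \<le> m") (simp_all add: sum.delta')
  finally show ?thesis .
qed



definition Phi :: "real \<Rightarrow> real fps" where
  "Phi b = sumfam hh (\<lambda>N m. (fps_X * (fps_const b + fps_X))^m * (fps_X^2)^(N-m))"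

lemma LHS_nth:
  fixes b :: real
  assumes b: "b \<noteq> 0"
  shows "(fps_const b * inverse (fps_const b + fps_X) * (Abs_fps (Wt_b b) oo (fps_X * inverse (fps_const b + fps_X)))) $$ k
     = (\<Sum>n\<le>k. Wt_b b n * ((- real (n+1)) gchoose (k-n))) / b^k"
proof -
  have "(fps_const b * inverse (fps_const b + fps_X) * (Abs_fps (Wt_b b) oo (fps_X * inverse (fps_const b + fps_X)))) $$ k
      = (\<Sum>n\<le>k. Abs_fps (Wt_b b) $$ n * (fps_const b * inverse (fps_const b + fps_X) * (fps_X * inverse (fps_const b + fps_X))^n) $$ k)"
    by (rule GC) simp
  also have "\<dots> = (\<Sum>n\<le>k. Wt_b b n * (((- real (n+1)) gchoose (k-n)) / b^k))"
  proof (rule sum.cong[OF refl])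
    fix n assume n: "n \<in> {..k}"
    have e: "fps_const b * inverse (fps_const b + fps_X) * (fps_X * inverse (fps_const b + fps_X))^n
        = fps_X^n * (fps_const b * inverse (fps_const b + fps_X)^(n+1))"
      by (simp add: power_mult_distrib mult_ac)
    have "(fps_const b * inverse (fps_const b + fps_X) * (fps_X * inverse (fps_const b + fps_X))^n) $$ k
        = b * ((- real (n+1)) gchoose (k-n)) / b^(n+1+(k-n))"
      unfolding e fps_X_power_mult_nth fps_mult_left_const_nth inv_bX_pow_nth[OF b] using n by simp
    also have "n+1+(k-n) = Suc k" using n by simp
    finally show "Abs_fps (Wt_b b) $$ n * (fps_const b * inverse (fps_const b + fps_X) * (fps_X * inverse (fps_const b + fps_X))^n) $$ k
        = Wt_b b n * (((- real (n+1)) gchoose (k-n)) / b^k)"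
      using b by simp
  qed
  finally show ?thesis by (simp add: sum_divide_distrib)
qed

lemma Phi_nth:
  "Phi b $$ k = (\<Sum>N\<le>k. \<Sum>m\<le>N. hh N m * (if k < 2*N-m then 0 else real (m choose (k+m-2*N)) * b^(m-(k+m-2*N))))"
  unfolding Phi_def sumfam_def fps_nth_Abs_fps
proof (rule sum.cong[OF refl], rule sum.cong[OF refl])
  fix N m :: nat assume N: "N \<in> {..k}" and m: "m \<in> {..N}"
  have "(fps_X * (fps_const b + fps_X))^m * (fps_X^2)^(N-m) = fps_X^(2*N-m) * (fps_const b + fps_X)^m"
  proof -
    have "(fps_X * (fps_const b + fps_X))^m * (fps_X^2)^(N-m) = fps_X^(m + 2*(N-m)) * (fps_const b + fps_X)^m"
    proof -
      have a: "(fps_X^2)^(N-m) = (fps_X^(2*(N-m)) :: real fps)" by (simp add: power_mult)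
      show ?thesis unfolding a power_mult_distrib power_add by (simp add: mult_ac)
    qed
    also have "m + 2*(N-m) = 2*N-m" using m by simp
    finally show ?thesis .
  qed
  then show "hh N m * ((fps_X * (fps_const b + fps_X))^m * (fps_X^2)^(N-m)) $$ k
      = hh N m * (if k < 2*N-m then 0 else real (m choose (k+m-2*N)) * b^(m-(k+m-2*N)))"
    using m by (simp add: fps_X_power_mult_nth bX_pow_nth)
qed

lemma I_main:
  fixes b :: real
  assumes b: "b \<noteq> 0"
  shows "fps_const b * inverse (fps_const b + fps_X) * (Abs_fps (Wt_b b) oo (fps_X * inverse (fps_const b + fps_X))) = Phi b"
proof (rule fps_ext)
  fix k
  let ?L = "fps_const b * inverse (fps_const b + fps_X) * (Abs_fps (Wt_b b) oo (fps_X * inverse (fps_const b + fps_X)))"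
  have bk: "b^k \<noteq> 0" using b by simp
  have L: "?L $$ k * b^k = (\<Sum>N\<le>k. f N * b^(2*N) * (real (k choose N) * real (N choose (k - N))))"
  proof -
    have "?L $$ k * b^k = (\<Sum>n\<le>k. Wt_b b n * ((- real (n+1)) gchoose (k-n)))"
      unfolding LHS_nth[OF b] using bk by simp
    also have "\<dots> = (\<Sum>n\<le>k. \<Sum>N\<le>k. f N * b^(2*N) * (real (n choose N)^2 * ((- real (n+1)) gchoose (k-n))))"
    proof (rule sum.cong[OF refl])
      fix n assume n: "n \<in> {..k}"
      have "Wt_b b n = (\<Sum>N\<le>k. real (n choose N)^2 * (f N * b^(2*N)))"
        unfolding Wt_b_expand by (rule sum.mono_neutral_left) (use n in auto)
      then show "Wt_b b n * ((- real (n+1)) gchoose (k-n)) = (\<Sum>N\<le>k. f N * b^(2*N) * (real (n choose N)^2 * ((- real (n+1)) gchoose (k-n))))"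
        by (simp add: sum_distrib_right sum_distrib_left mult_ac)
    qed
    also have "\<dots> = (\<Sum>N\<le>k. \<Sum>n\<le>k. f N * b^(2*N) * (real (n choose N)^2 * ((- real (n+1)) gchoose (k-n))))"
      by (rule sum.swap)
    also have "\<dots> = (\<Sum>N\<le>k. f N * b^(2*N) * (real (k choose N) * real (N choose (k - N))))"
    proof (rule sum.cong[OF refl])
      fix N assume "N \<in> {..k}"
      then have N: "N \<le> k" by simp
      have "(\<Sum>n\<le>k. f N * b^(2*N) * (real (n choose N)^2 * ((- real (n+1)) gchoose (k-n))))
          = f N * b^(2*N) * (\<Sum>n\<le>k. real (n choose N)^2 * ((- real (n+1)) gchoose (k-n)))"
        by (simp only: sum_distrib_left)
      then show "(\<Sum>n\<le>k. f N * b^(2*N) * (real (n choose N)^2 * ((- real (n+1)) gchoose (k-n))))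
          = f N * b^(2*N) * (real (k choose N) * real (N choose (k - N)))"
        by (simp only: BinA[OF N])
    qed
    finally show ?thesis .
  qed
  have R: "Phi b $$ k * b^k = (\<Sum>N\<le>k. f N * b^(2*N) * (real (k choose N) * real (N choose (k - N))))"
  proof -
    have "Phi b $$ k * b^k = (\<Sum>N\<le>k. \<Sum>m\<le>N. hh N m * ((if k < 2*N-m then 0 else real (m choose (k+m-2*N)) * b^(m-(k+m-2*N))) * b^k))"
      unfolding Phi_nth by (simp add: sum_distrib_right sum_distrib_left mult_ac)
    also have "\<dots> = (\<Sum>N\<le>k. f N * b^(2*N) * (\<Sum>m\<le>N. real (N choose m)^2 * (if k < 2*N - m then 0 else real (m choose (k + m - 2*N)))))"
    proof (rule sum.cong[OF refl])
      fix N assume N: "N \<in> {..k}"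
      have "hh N m * ((if k < 2*N-m then 0 else real (m choose (k+m-2*N)) * b^(m-(k+m-2*N))) * b^k)
          = f N * b^(2*N) * (real (N choose m)^2 * (if k < 2*N - m then 0 else real (m choose (k + m - 2*N))))"
        if m: "m \<le> N" for m
      proof (cases "k < 2*N-m")
        case True then show ?thesis by simp
      next
        case False
        show ?thesis
        proof (cases "k + m - 2*N \<le> m")
          case True
          then have "m-(k+m-2*N) + k = 2*N" using False m by linarith
          then have "b^(m-(k+m-2*N)) * b^k = b^(2*N)" by (metis power_add)
          then show ?thesis using False unfolding hh_def by (simp add: mult_ac)
        next
          case c: False
          then have "m choose (k+m-2*N) = 0" by simp
          then show ?thesis using False by simp
        qed
      qed
      then show "(\<Sum>m\<le>N. hh N m * ((if k < 2*N-m then 0 else real (m choose (k+m-2*N)) * b^(m-(k+m-2*N))) * b^k))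
          = f N * b^(2*N) * (\<Sum>m\<le>N. real (N choose m)^2 * (if k < 2*N - m then 0 else real (m choose (k + m - 2*N))))"
        by (simp add: sum_distrib_left)
    qed
    also have "\<dots> = (\<Sum>N\<le>k. f N * b^(2*N) * (real (k choose N) * real (N choose (k - N))))"
      by (rule sum.cong[OF refl]) (simp add: BinB)
    finally show ?thesis .
  qed
  from L R have "?L $$ k * b^k = Phi b $$ k * b^k" by simp
  then show "?L $$ k = Phi b $$ k" using b by simp
qed



lemma ord_ok_compose:
  assumes "ord_ok T" "w $$ 0 = 0"
  shows "ord_ok (\<lambda>N m. T N m oo w)"
  unfolding ord_ok_def
proof (intro allI impI)
  fix N m j :: nat assume "m \<le> N" "j < N"
  then show "(T N m oo w) $$ j = 0"
    using assms unfolding ord_ok_def fps_compose_nth by (intro sum.neutral) auto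
qed

lemma ord_below_mult:
  fixes A :: "real fps"
  assumes "\<And>i. i < N \<Longrightarrow> A $$ i = 0" "j < N"
  shows "(A * B) $$ j = 0"
  by (rule prod_below[of N _ 0]) (use assms in auto)

lemma ord_pow2:
  fixes a b :: "real fps"
  assumes "a $$ 0 = 0" "b $$ 0 = 0" "i < m + n"
  shows "(a^m * b^n) $$ i = 0"
  by (rule prod_below[of m _ n]) (use assms power_nth_below in auto)

lemma sqrtB:
  fixes g :: "real fps"
  assumes "g $$ 0 = 0"
  shows "(fps_binomial (-1/2) oo g)^2 = inverse (1 + g)"
proof -
  have "(fps_binomial (-1/2) oo g)^2 = fps_binomial (-1/2)^2 oo g" using assms by (simp add: fps_compose_power)
  also have "fps_binomial (-1/2 :: real)^2 = inverse (1 + fps_X)"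
    by (simp add: fps_binomial_power fps_binomial_minus_one[symmetric])
  also have "inverse (1 + fps_X) oo g = inverse (1 + g)"
    using assms by (simp add: fps_inverse_compose fps_compose_add_distrib)
  finally show ?thesis .
qed

lemma BN_compose:
  fixes g :: "real fps"
  assumes "g $$ 0 = 0"
  shows "BN N oo g = (fps_binomial (-1/2) oo g) * inverse (1 + g)^N"
proof -
  have "BN N = fps_binomial (-1/2) * inverse (1 + fps_X)^N"
  proof -
    have "fps_binomial (-1/2) * inverse (1 + fps_X)^N = fps_binomial (-1/2) * fps_binomial (of_nat N * (-1::real))"
      by (simp only: fps_binomial_minus_one[symmetric] fps_binomial_power)
    also have "\<dots> = fps_binomial (-1/2 + of_nat N * (-1))" by (simp only: fps_binomial_add_mult)
    also have "-1/2 + of_nat N * (-1) = - real N - 1/2" by simp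
    finally show ?thesis unfolding BN_def by simp
  qed
  then have "BN N oo g = (fps_binomial (-1/2) oo g) * (inverse (1 + fps_X) oo g)^N"
    using assms by (simp add: fps_compose_mult_distrib fps_compose_power)
  also have "inverse (1 + fps_X) oo g = inverse (1 + g)"
    using assms by (simp add: fps_inverse_compose fps_compose_add_distrib)
  finally show ?thesis .
qed

lemma sq_unique:
  fixes P R :: "real fps"
  assumes "P^2 = R^2" "P $$ 0 = 1" "R $$ 0 = 1"
  shows "P = R"
proof -
  have "(P - R) * (P + R) = 0" using assms(1) by (simp add: algebra_simps power2_eq_square)
  moreover have "P + R \<noteq> 0"
  proof
    assume "P + R = 0"
    then have "(P + R) $$ 0 = 0" by simp
    then show False using assms by simp
  qed
  ultimately show ?thesis by simp
qed

context
  fixes b :: real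
begin

abbreviation "cb \<equiv> fps_const b"
abbreviation "QQ \<equiv> 1 + cb * fps_X + fps_X^2"
abbreviation "EE \<equiv> 1 + cb * fps_X"
abbreviation "al \<equiv> fps_X * (cb + fps_X)"
abbreviation "be \<equiv> fps_X^2 * inverse EE"
abbreviation "ww \<equiv> fps_X * inverse QQ"

lemma Q0: "QQ $$ 0 = 1" by simp
lemma E0: "EE $$ 0 = 1" by simp
lemma al0: "al $$ 0 = 0" by simp
lemma be0: "be $$ 0 = 0" by simp
lemma ww0: "ww $$ 0 = 0" by simp
lemma QiQ: "QQ * inverse QQ = 1" by (rule inverse_mult_eq_1') simp
lemma EiE: "EE * inverse EE = 1" by (rule inverse_mult_eq_1') simp

lemma one_al: "1 + al = QQ" by (simp add: algebra_simps power2_eq_square)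

lemma one_be: "1 + be = QQ * inverse EE"
proof -
  have "1 + be = EE * inverse EE + fps_X^2 * inverse EE" using EiE by simp
  also have "\<dots> = QQ * inverse EE" by (simp add: algebra_simps)
  finally show ?thesis .
qed

lemma inv_one_be: "inverse (1 + be) = inverse QQ * EE"
  unfolding one_be fps_inverse_mult by simp

lemma be_rho: "be * inverse (1 + be) = fps_X^2 * inverse QQ"
proof -
  have "be * inverse (1 + be) = fps_X^2 * inverse QQ * (EE * inverse EE)"
    unfolding inv_one_be by (simp add: mult_ac)
  then show ?thesis using EiE by simp
qed

lemma Pprod: "(fps_binomial (-1/2) oo al) * (fps_binomial (-1/2) oo (cb * fps_X)) * (fps_binomial (-1/2) oo be) = inverse QQ"
proof (rule sq_unique)
  have "((fps_binomial (-1/2) oo al) * (fps_binomial (-1/2) oo (cb * fps_X)) * (fps_binomial (-1/2) oo be))^2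
      = inverse (1 + al) * inverse (1 + cb * fps_X) * inverse (1 + be)"
  proof -
    have s: "(fps_binomial (-1/2) oo (cb*fps_X))^2 = inverse(1 + cb*fps_X)" by (rule sqrtB) simp
    show ?thesis by (simp only: power_mult_distrib sqrtB[OF al0] sqrtB[OF be0] s)
  qed
  also have "\<dots> = inverse QQ * inverse QQ * (EE * inverse EE)"
    unfolding one_al inv_one_be by (simp add: mult_ac)
  also have "\<dots> = (inverse QQ)^2" using EiE by (simp add: power2_eq_square)
  finally show "((fps_binomial (-1/2) oo al) * (fps_binomial (-1/2) oo (cb * fps_X)) * (fps_binomial (-1/2) oo be))^2 = (inverse QQ)^2" .
qed simp_all

lemma part3:
  "(FF oo (- al)) * (fps_binomial (-1/2) oo (cb * fps_X)) * (FF oo (- be))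
   = inverse QQ * (FF oo (al * inverse QQ)) * (FF oo (fps_X^2 * inverse QQ))"
proof -
  have "(FF oo (- al)) * (fps_binomial (-1/2) oo (cb * fps_X)) * (FF oo (- be))
      = ((fps_binomial (-1/2) oo al) * (fps_binomial (-1/2) oo (cb * fps_X)) * (fps_binomial (-1/2) oo be))
        * (FF oo (al * inverse (1 + al))) * (FF oo (be * inverse (1 + be)))"
    unfolding pfaff[OF al0] pfaff[OF be0] by (simp add: mult_ac)
  then show ?thesis unfolding Pprod be_rho one_al .
qed

abbreviation "DD \<equiv> (cb + fps_X) * EE"
abbreviation "TT \<equiv> (\<lambda>N m. al^m * be^(N-m) * (BN N oo al) * (BN N oo be))"
abbreviation "T0 \<equiv> (\<lambda>N m. (fps_X * (cb + fps_X))^m * (fps_X^2)^(N-m))"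

lemma D_eq: "DD = cb * QQ + fps_X" by (simp add: algebra_simps power2_eq_square)

lemma cb_ww: "cb + ww = DD * inverse QQ"
proof -
  have "cb + ww = cb * (QQ * inverse QQ) + ww" using QiQ by simp
  also have "\<dots> = (cb * QQ + fps_X) * inverse QQ" by (simp add: algebra_simps)
  finally show ?thesis unfolding D_eq .
qed

lemma ord_TT: "ord_ok TT"
  unfolding ord_ok_def
proof (intro allI impI)
  fix N m j :: nat assume m: "m \<le> N" and j: "j < N"
  have "\<And>i. i < N \<Longrightarrow> (al^m * be^(N-m)) $$ i = 0"
    using m by (intro ord_pow2) (simp_all add: al0 be0)
  then have "\<And>i. i < N \<Longrightarrow> (al^m * be^(N-m) * (BN N oo al)) $$ i = 0"
    by (rule ord_below_mult)
  then show "TT N m $$ j = 0" using j by (rule ord_below_mult)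
qed

lemma ord_T0: "ord_ok T0"
  unfolding ord_ok_def
proof (intro allI impI)
  fix N m j :: nat assume m: "m \<le> N" and j: "j < N"
  show "T0 N m $$ j = 0" using m j by (intro ord_pow2) simp_all
qed

lemma term_eq:
  assumes b: "b \<noteq> 0" and m: "m \<le> N"
  shows "(fps_binomial (-1/2) oo (cb * fps_X)) * TT N m = inverse QQ * (T0 N m oo ww)"
proof -
  define n where "n = N - m"
  have N: "N = m + n" using m n_def by simp
  have 1: "BN N oo al = (fps_binomial (-1/2) oo al) * (inverse QQ)^N"
    unfolding BN_compose[OF al0] one_al ..
  have 2: "BN N oo be = (fps_binomial (-1/2) oo be) * (inverse QQ * EE)^N"
    unfolding BN_compose[OF be0] inv_one_be ..
  have "(fps_binomial (-1/2) oo (cb * fps_X)) * TT N m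
      = ((fps_binomial (-1/2) oo al) * (fps_binomial (-1/2) oo (cb * fps_X)) * (fps_binomial (-1/2) oo be))
        * (al^m * be^n * (inverse QQ)^N * (inverse QQ * EE)^N)"
    unfolding 1 2 n_def by (simp add: mult_ac)
  also have "\<dots> = inverse QQ * ((al * EE * (inverse QQ)^2)^m * (be * EE * (inverse QQ)^2)^n)"
    unfolding Pprod N by (simp add: power_mult_distrib power_add mult_ac power2_eq_square)
  also have "al * EE * (inverse QQ)^2 = ww * (cb + ww)"
    unfolding cb_ww by (simp add: mult_ac power2_eq_square)
  also have "be * EE * (inverse QQ)^2 = ww^2"
  proof -
    have "be * EE = fps_X^2 * (EE * inverse EE)" by (simp add: mult_ac)
    then have "be * EE = fps_X^2" using EiE by simp
    then show ?thesis by (simp add: power_mult_distrib)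
  qed
  also have "(ww * (cb + ww))^m * (ww^2)^n = T0 N m oo ww"
    unfolding n_def using ww0 by (simp add: fps_compose_mult_distrib fps_compose_power[symmetric] fps_compose_add_distrib)
  finally show ?thesis .
qed

lemma part2:
  assumes b: "b \<noteq> 0"
  shows "cb * inverse DD * (Abs_fps (Wt_b b) oo (fps_X * inverse DD))
     = (FF oo (- al)) * (fps_binomial (-1/2) oo (cb * fps_X)) * (FF oo (- be))"
proof -
  have cbX0: "(cb + fps_X) $$ 0 \<noteq> 0" using b by simp
  let ?W = "Abs_fps (Wt_b b)"
  have c1: "(fps_X * inverse (cb + fps_X)) oo ww = ww * inverse (cb + ww)"
    using ww0 cbX0 by (simp add: fps_compose_mult_distrib fps_inverse_compose fps_compose_add_distrib)
  have c2: "inverse (cb + fps_X) oo ww = inverse (cb + ww)"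
    using ww0 cbX0 by (simp add: fps_inverse_compose fps_compose_add_distrib)
  have iD: "inverse (cb + ww) = inverse DD * QQ"
    unfolding cb_ww fps_inverse_mult by simp
  have "(cb * inverse (cb + fps_X) * (?W oo (fps_X * inverse (cb + fps_X)))) oo ww
      = cb * inverse (cb + ww) * (?W oo (ww * inverse (cb + ww)))"
  proof -
    have "(cb * inverse (cb + fps_X) * (?W oo (fps_X * inverse (cb + fps_X)))) oo ww
        = cb * (inverse (cb + fps_X) oo ww) * ((?W oo (fps_X * inverse (cb + fps_X))) oo ww)"
      using ww0 by (simp add: fps_compose_mult_distrib)
    also have "(?W oo (fps_X * inverse (cb + fps_X))) oo ww = ?W oo ((fps_X * inverse (cb + fps_X)) oo ww)"
      by (rule fps_compose_assoc[symmetric]) (use ww0 in simp_all)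
    finally show ?thesis unfolding c1 c2 .
  qed
  then have "inverse QQ * (Phi b oo ww) = inverse QQ * (cb * inverse (cb + ww) * (?W oo (ww * inverse (cb + ww))))"
    unfolding I_main[OF b, symmetric] by simp
  also have "\<dots> = cb * inverse DD * (?W oo (fps_X * inverse DD)) * (QQ * inverse QQ)"
  proof -
    have "ww * inverse (cb + ww) = fps_X * inverse DD * (QQ * inverse QQ)" unfolding iD by (simp add: mult_ac)
    then have w_i: "ww * inverse (cb + ww) = fps_X * inverse DD" by (simp only: QiQ mult_1_right)
    show ?thesis unfolding w_i unfolding iD by (simp add: mult_ac)
  qed
  finally have LHS: "inverse QQ * (Phi b oo ww) = cb * inverse DD * (?W oo (fps_X * inverse DD))"
    using QiQ by simp
  have "(FF oo (- al)) * (fps_binomial (-1/2) oo (cb * fps_X)) * (FF oo (- be))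
      = (fps_binomial (-1/2) oo (cb * fps_X)) * ((FF oo (- al)) * (FF oo (- be)))"
    by (simp add: mult_ac)
  also have "\<dots> = (fps_binomial (-1/2) oo (cb * fps_X)) * sumfam hh TT"
    unfolding E2[OF al0 be0] ..
  also have "\<dots> = sumfam hh (\<lambda>N m. (fps_binomial (-1/2) oo (cb * fps_X)) * TT N m)"
    by (rule sumfam_mult[OF ord_TT])
  also have "\<dots> = sumfam hh (\<lambda>N m. inverse QQ * (T0 N m oo ww))"
    by (rule sumfam_cong) (rule term_eq[OF b])
  also have "\<dots> = inverse QQ * sumfam hh (\<lambda>N m. T0 N m oo ww)"
    by (rule sumfam_mult[symmetric]) (rule ord_ok_compose[OF ord_T0 ww0])
  also have "sumfam hh (\<lambda>N m. T0 N m oo ww) = Phi b oo ww"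
    unfolding Phi_def by (rule sumfam_compose[symmetric]) (rule ord_T0, rule ww0)
  finally show ?thesis unfolding LHS by simp
qed

end


lemma Wt_b4: "Wt_b 4 = Wt_even"
  by (rule ext) (simp add: Wt_b_def Wt_even_def)

theorem theorem1:
  fixes b :: real
  assumes "b \<noteq> 0"
  shows
  "Abs_fps Wt_even oo (fps_X * inverse ((fps_const 4 + fps_X) * (1 + fps_const 4 * fps_X)))
     = (fps_const 4 + fps_X) * (1 + fps_const 4 * fps_X)
         * inverse (fps_const 4 * (1 + fps_const 4 * fps_X + fps_X^2))
       * (hyp2F1 (1/2) (1/2) 1 oo (fps_X * (fps_const 4 + fps_X) * inverse (1 + fps_const 4 * fps_X + fps_X^2)))
       * (hyp2F1 (1/2) (1/2) 1 oo (fps_X^2 * inverse (1 + fps_const 4 * fps_X + fps_X^2)))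
   \<and> fps_const b * inverse ((fps_const b + fps_X) * (1 + fps_const b * fps_X))
       * (Abs_fps (Wt_b b) oo (fps_X * inverse ((fps_const b + fps_X) * (1 + fps_const b * fps_X))))
     = (hyp2F1 (1/2) (1/2) 1 oo (- (fps_X * (fps_const b + fps_X))))
       * (fps_binomial (-1/2) oo (fps_const b * fps_X))
       * (hyp2F1 (1/2) (1/2) 1 oo (- (fps_X^2 * inverse (1 + fps_const b * fps_X))))
   \<and> (hyp2F1 (1/2) (1/2) 1 oo (- (fps_X * (fps_const b + fps_X))))
       * (fps_binomial (-1/2) oo (fps_const b * fps_X))
       * (hyp2F1 (1/2) (1/2) 1 oo (- (fps_X^2 * inverse (1 + fps_const b * fps_X))))
     = inverse (1 + fps_const b * fps_X + fps_X^2)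
       * (hyp2F1 (1/2) (1/2) 1 oo (fps_X * (fps_const b + fps_X) * inverse (1 + fps_const b * fps_X + fps_X^2)))
       * (hyp2F1 (1/2) (1/2) 1 oo (fps_X^2 * inverse (1 + fps_const b * fps_X + fps_X^2)))"
proof (intro conjI)
  show "fps_const b * inverse ((fps_const b + fps_X) * (1 + fps_const b * fps_X))
       * (Abs_fps (Wt_b b) oo (fps_X * inverse ((fps_const b + fps_X) * (1 + fps_const b * fps_X))))
     = (hyp2F1 (1/2) (1/2) 1 oo (- (fps_X * (fps_const b + fps_X))))
       * (fps_binomial (-1/2) oo (fps_const b * fps_X))
       * (hyp2F1 (1/2) (1/2) 1 oo (- (fps_X^2 * inverse (1 + fps_const b * fps_X))))"
    by (rule part2[OF assms])
  show "(hyp2F1 (1/2) (1/2) 1 oo (- (fps_X * (fps_const b + fps_X))))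
       * (fps_binomial (-1/2) oo (fps_const b * fps_X))
       * (hyp2F1 (1/2) (1/2) 1 oo (- (fps_X^2 * inverse (1 + fps_const b * fps_X))))
     = inverse (1 + fps_const b * fps_X + fps_X^2)
       * (hyp2F1 (1/2) (1/2) 1 oo (fps_X * (fps_const b + fps_X) * inverse (1 + fps_const b * fps_X + fps_X^2)))
       * (hyp2F1 (1/2) (1/2) 1 oo (fps_X^2 * inverse (1 + fps_const b * fps_X + fps_X^2)))"
    by (rule part3)
  let ?D = "(fps_const 4 + fps_X) * (1 + fps_const 4 * fps_X) :: real fps"
  let ?Q = "1 + fps_const 4 * fps_X + fps_X^2 :: real fps"
  let ?Z = "Abs_fps Wt_even oo (fps_X * inverse ?D)"
  let ?A = "hyp2F1 (1/2) (1/2) 1 oo (fps_X * (fps_const 4 + fps_X) * inverse ?Q)"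
  let ?B = "hyp2F1 (1/2) (1/2) 1 oo (fps_X^2 * inverse ?Q)"
  have h: "fps_const 4 * inverse ?D * ?Z = inverse ?Q * ?A * ?B"
    using part2[of 4] part3[of 4] unfolding Wt_b4 by simp
  have D1: "?D * inverse ?D = 1" by (rule inverse_mult_eq_1') simp
  have c1: "inverse (fps_const 4 :: real fps) * fps_const 4 = 1"
  proof -
    have "inverse (fps_const 4 :: real fps) * fps_const 4 = fps_const (inverse 4 * 4)"
      by (simp only: fps_const_inverse fps_const_mult)
    then show ?thesis by simp
  qed
  have "?Z = (?D * inverse ?D) * (inverse (fps_const 4) * fps_const 4) * ?Z" unfolding D1 c1 by simp
  also have "\<dots> = ?D * inverse (fps_const 4) * (fps_const 4 * inverse ?D * ?Z)" by (simp only: mult_ac)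
  also have "\<dots> = ?D * inverse (fps_const 4) * (inverse ?Q * ?A * ?B)" unfolding h ..
  also have "\<dots> = ?D * inverse (fps_const 4 * ?Q) * ?A * ?B" by (simp add: fps_inverse_mult mult_ac)
  finally show "?Z = ?D * inverse (fps_const 4 * ?Q) * ?A * ?B" .
qed

end
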